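(* Let $\mathbf{s}, \mathbf{n} \in \mathbb{R}^T$, let $\mathbf{y} = \mathbf{s} + \mathbf{n}$, and let $\widehat{\mathbf{s}} \in \mathbb{R}^T$ be any vector (the enhanced signal). Let $\omega_{\text{obs}} > 0$ and set $\overline{\mathbf{s}} = \widehat{\mathbf{s}} + \omega_{\text{obs}}\mathbf{y}$. Assume $\mathbf{P}_{\mathbf{s},\mathbf{n}}\widehat{\mathbf{s}} \neq \mathbf{0}$ and $\widehat{\mathbf{s}} - \mathbf{P}_{\mathbf{s},\mathbf{n}}\widehat{\mathbf{s}} \neq \mathbf{0}$. If $\langle \widehat{\mathbf{s}}, \mathbf{y} \rangle > 0$, then $\mathrm{SAR}(\overline{\mathbf{s}}) > \mathrm{SAR}(\widehat{\mathbf{s}})$.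
   Context: Fix an integer $L \ge 1$. For a vector $\mathbf{x} \in \mathbb{R}^T$ and $0 \le \tau \le L-1$, let $\mathbf{x}^{\tau}$ denote $\mathbf{x}$ delayed by $\tau$ samples, i.e. $(\mathbf{x}^{\tau})_t = x_{t-\tau}$ for $t > \tau$ and $0$ otherwise. Let $\mathbf{A}_{\mathbf{s},\mathbf{n}} = [\mathbf{s}^{0},\dots,\mathbf{s}^{L-1},\mathbf{n}^{0},\dots,\mathbf{n}^{L-1}] \in \mathbb{R}^{T\times 2L}$, assumed to have full column rank, and let $\mathbf{P}_{\mathbf{s},\mathbf{n}} = \mathbf{A}_{\mathbf{s},\mathbf{n}}(\mathbf{A}_{\mathbf{s},\mathbf{n}}^{\mathsf T}\mathbf{A}_{\mathbf{s},\mathbf{n}})^{-1}\mathbf{A}_{\mathbf{s},\mathbf{n}}^{\mathsf T}$ be the orthogonal projection onto the span of these delayed signals. For an estimate $\mathbf{z} \in \mathbb{R}^T$, define the artifact error $\mathbf{e}_{\text{artif}}(\mathbf{z}) = \mathbf{z} - \mathbf{P}_{\mathbf{s},\mathbf{n}}\mathbf{z}$ and the signal-to-artifact ratio $\mathrm{SAR}(\mathbf{z}) = 10\log_{10}\frac{\|\mathbf{P}_{\mathbf{s},\mathbf{n}}\mathbf{z}\|^2}{\|\mathbf{e}_{\text{artif}}(\mathbf{z})\|^2}$ (equivalently $\|\mathbf{s}_{\text{target}}+\mathbf{e}_{\text{noise}}\|^2/\|\mathbf{e}_{\text{artif}}\|^2$ in the decomposition $\mathbf{z} = \mathbf{P}_{\mathbf{s}}\mathbf{z}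 + (\mathbf{P}_{\mathbf{s},\mathbf{n}}-\mathbf{P}_{\mathbf{s}})\mathbf{z} + \mathbf{e}_{\text{artif}}(\mathbf{z})$). Here $\langle\cdot,\cdot\rangle$ is the Euclidean inner product. *)

theory Defs
  imports Complex_Main
begin

text \<open>Vectors in R^T are represented as functions nat => real; only the
  entries with index t < T (0-based indices 0..T-1) are relevant.\<close>

definition ip :: "nat \<Rightarrow> (nat \<Rightarrow> real) \<Rightarrow> (nat \<Rightarrow> real) \<Rightarrow> real" where
  "ip T x y = (\<Sum>t<T. x t * y t)"

definition sqnorm :: "nat \<Rightarrow> (nat \<Rightarrow> real) \<Rightarrow> real" where
  "sqnorm T x = ip T x x"

definition delay :: "(nat \<Rightarrow> real) \<Rightarrow> nat \<Rightarrow> nat \<Rightarrow> real" where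
  "delay x tau = (\<lambda>t. if tau \<le> t then x (t - tau) else 0)"

text \<open>Column space of A_{s,n} = [s^0..s^(L-1), n^0..n^(L-1)], as vectors in R^T.\<close>
definition colspace :: "nat \<Rightarrow> nat \<Rightarrow> (nat \<Rightarrow> real) \<Rightarrow> (nat \<Rightarrow> real) \<Rightarrow> (nat \<Rightarrow> real) set" where
  "colspace T L s n = {(\<lambda>t. if t < T then (\<Sum>j<L. a j * delay s j t + b j * delay n j t) else 0)
                         | a b. True}"

definition full_col_rank :: "nat \<Rightarrow> nat \<Rightarrow> (nat \<Rightarrow> real) \<Rightarrow> (nat \<Rightarrow> real) \<Rightarrow> bool" where
  "full_col_rank T L s n \<longleftrightarrow>
     (\<forall>a b. (\<forall>t<T. (\<Sum>j<L. a j * delay s j t + b j * delay n j t) = 0)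
            \<longrightarrow> (\<forall>j<L. a j = 0 \<and> b j = 0))"

definition proj :: "nat \<Rightarrow> nat \<Rightarrow> (nat \<Rightarrow> real) \<Rightarrow> (nat \<Rightarrow> real) \<Rightarrow> (nat \<Rightarrow> real) \<Rightarrow> (nat \<Rightarrow> real)" where
  "proj T L s n z = (THE w. w \<in> colspace T L s n \<and>
      (\<forall>j<L. ip T (\<lambda>t. z t - w t) (delay s j) = 0 \<and> ip T (\<lambda>t. z t - w t) (delay n j) = 0))"

definition e_artif :: "nat \<Rightarrow> nat \<Rightarrow> (nat \<Rightarrow> real) \<Rightarrow> (nat \<Rightarrow> real) \<Rightarrow> (nat \<Rightarrow> real) \<Rightarrow> (nat \<Rightarrow> real)" where
  "e_artif T L s n z = (\<lambda>t. z t - proj T L s n z t)"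

definition SAR :: "nat \<Rightarrow> nat \<Rightarrow> (nat \<Rightarrow> real) \<Rightarrow> (nat \<Rightarrow> real) \<Rightarrow> (nat \<Rightarrow> real) \<Rightarrow> real" where
  "SAR T L s n z = 10 * log 10 (sqnorm T (proj T L s n z) / sqnorm T (e_artif T L s n z))"

definition nonzero_vec :: "nat \<Rightarrow> (nat \<Rightarrow> real) \<Rightarrow> bool" where
  "nonzero_vec T x \<longleftrightarrow> (\<exists>t<T. x t \<noteq> 0)"

end

theory Submission
  imports Defs
begin

lemma ip_add_left: "ip T (\<lambda>t. x t + y t) u = ip T x u + ip T y u"
  by (simp add: ip_def sum.distrib algebra_simps)
lemma ip_diff_left: "ip T (\<lambda>t. x t - y t) u = ip T x u - ip T y u"
  by (simp add: ip_def sum_subtractf algebra_simps)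
lemma ip_scale_left: "ip T (\<lambda>t. c * x t) u = c * ip T x u"
  by (simp add: ip_def sum_distrib_left algebra_simps)
lemma ip_sym: "ip T x y = ip T y x"
  by (simp add: ip_def mult.commute)
lemma ip_cong: "(\<And>t. t<T \<Longrightarrow> x t = x' t) \<Longrightarrow> (\<And>t. t<T \<Longrightarrow> y t = y' t) \<Longrightarrow> ip T x y = ip T x' y'"
  by (simp add: ip_def)
lemma ip_zero_right: "ip T x (\<lambda>t. 0) = 0"
  by (simp add: ip_def)

lemma sqnorm_zero: assumes "ip T r r = 0" "t < T" shows "r t = 0"
proof -
  have "\<forall>i\<in>{..<T}. r i * r i = 0"
    using assms(1) unfolding ip_def by (subst sum_nonneg_eq_0_iff[symmetric]) auto
  thus ?thesis using assms(2) by auto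
qed

lemma sqnorm_zero_ip: assumes "ip T r r = 0" shows "ip T x r = 0"
  using sqnorm_zero[OF assms] by (simp add: ip_def)

lemma sqnorm_pos: assumes "nonzero_vec T x" shows "sqnorm T x > 0"
proof -
  obtain t where t: "t < T" "x t \<noteq> 0" using assms unfolding nonzero_vec_def by auto
  have ge: "sqnorm T x \<ge> 0" unfolding sqnorm_def ip_def by (auto intro: sum_nonneg)
  have "sqnorm T x \<noteq> 0" using sqnorm_zero[of T x t] t unfolding sqnorm_def by auto
  thus ?thesis using ge by auto
qed

definition HP :: "nat \<Rightarrow> (nat \<Rightarrow> real) set \<Rightarrow> bool" where
  "HP T S \<longleftrightarrow> (\<forall>z. \<exists>w\<in>S. \<forall>u\<in>S. ip T (\<lambda>t. z t - w t) u = 0)"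
definition CL :: "(nat \<Rightarrow> real) set \<Rightarrow> bool" where
  "CL S \<longleftrightarrow> (\<forall>w1\<in>S. \<forall>w2\<in>S. \<forall>c. (\<lambda>t. w1 t - c * w2 t) \<in> S)"
definition rT :: "nat \<Rightarrow> (nat \<Rightarrow> real) \<Rightarrow> nat \<Rightarrow> real" where
  "rT T v = (\<lambda>t. if t<T then v t else 0)"
definition ext :: "nat \<Rightarrow> (nat \<Rightarrow> real) set \<Rightarrow> (nat \<Rightarrow> real) \<Rightarrow> (nat \<Rightarrow> real) set" where
  "ext T S v = {\<lambda>t. w t + c * rT T v t | w c. w \<in> S}"

lemma extI: "w \<in> S \<Longrightarrow> (\<lambda>t. w t + c * rT T v t) \<in> ext T S v"
  unfolding ext_def by blast

lemma ip_rT: "ip T x (rT T v) = ip T x v"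
  by (rule ip_cong) (auto simp: rT_def)

lemma CL_ext: assumes "CL S" shows "CL (ext T S v)"
  unfolding CL_def
proof (intro ballI allI)
  fix u1 u2 c assume "u1 \<in> ext T S v" "u2 \<in> ext T S v"
  then obtain w1 c1 w2 c2 where h: "w1 \<in> S" "w2 \<in> S" "u1 = (\<lambda>t. w1 t + c1 * rT T v t)"
     "u2 = (\<lambda>t. w2 t + c2 * rT T v t)" unfolding ext_def by auto
  have "(\<lambda>t. w1 t - c * w2 t) \<in> S" using assms h unfolding CL_def by auto
  moreover have "(\<lambda>t. u1 t - c * u2 t) = (\<lambda>t. (\<lambda>t. w1 t - c * w2 t) t + (c1 - c*c2) * rT T v t)"
    using h by (auto simp: algebra_simps)
  ultimately show "(\<lambda>t. u1 t - c * u2 t) \<in> ext T S v" using extI[of "\<lambda>t. w1 t - c * w2 t" S "c1 - c*c2" T v] by simp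
qed

lemma HP_ext: assumes "CL S" "HP T S" shows "HP T (ext T S v)"
  unfolding HP_def
proof
  fix z
  obtain w0 where w0: "w0 \<in> S" "\<And>u. u\<in>S \<Longrightarrow> ip T (\<lambda>t. z t - w0 t) u = 0"
    using assms(2) unfolding HP_def by blast
  obtain pv where pv: "pv \<in> S" "\<And>u. u\<in>S \<Longrightarrow> ip T (\<lambda>t. v t - pv t) u = 0"
    using assms(2) unfolding HP_def by blast
  define r where "r = (\<lambda>t. rT T v t - pv t)"
  have rS: "ip T r u = 0" if "u \<in> S" for u
  proof -
    have "ip T r u = ip T (\<lambda>t. v t - pv t) u" unfolding r_def by (rule ip_cong) (auto simp: rT_def)
    thus ?thesis using pv that by simp
  qed
  define c where "c = (if ip T r r = 0 then 0 else ip T (\<lambda>t. z t - w0 t) r / ip T r r)"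
  define w where "w = (\<lambda>t. (\<lambda>t. w0 t - c * pv t) t + c * rT T v t)"
  have "(\<lambda>t. w0 t - c * pv t) \<in> S" using assms(1) w0 pv unfolding CL_def by auto
  hence wE: "w \<in> ext T S v" unfolding w_def using extI[of "\<lambda>t. w0 t - c * pv t" S c T v] by simp
  define x where "x = (\<lambda>t. z t - w t)"
  have xeq: "x = (\<lambda>t. (z t - w0 t) - c * r t)" unfolding x_def w_def r_def by (auto simp: algebra_simps)
  have xS: "ip T x u = 0" if "u \<in> S" for u
    unfolding xeq using ip_diff_left[of T "\<lambda>t. z t - w0 t" "\<lambda>t. c * r t" u] ip_scale_left[of T c r u]
      w0(2)[OF that] rS[OF that] by simp
  have xr: "ip T x r = 0"
  proof (cases "ip T r r = 0")
    case True thus ?thesis by (simp add: sqnorm_zero_ip)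
  next
    case False
    have "ip T x r = ip T (\<lambda>t. z t - w0 t) r - c * ip T r r"
      unfolding xeq using ip_diff_left[of T "\<lambda>t. z t - w0 t" "\<lambda>t. c * r t" r] ip_scale_left[of T c r r] by simp
    thus ?thesis using False by (simp add: c_def)
  qed
  have xv: "ip T x (rT T v) = 0"
  proof -
    have "rT T v = (\<lambda>t. r t + pv t)" unfolding r_def by auto
    hence "ip T x (rT T v) = ip T r x + ip T pv x" by (simp add: ip_sym[of T x] ip_add_left)
    thus ?thesis using xr xS[OF pv(1)] by (simp add: ip_sym)
  qed
  have "\<forall>u\<in>ext T S v. ip T x u = 0"
  proof
    fix u assume "u \<in> ext T S v"
    then obtain w' d where h: "w' \<in> S" "u = (\<lambda>t. w' t + d * rT T v t)" unfolding ext_def by auto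
    have "ip T x u = ip T w' x + d * ip T (rT T v) x"
      unfolding h(2) by (simp add: ip_sym[of T x] ip_add_left ip_scale_left)
    thus "ip T x u = 0" using xS[OF h(1)] xv by (simp add: ip_sym)
  qed
  thus "\<exists>w\<in>ext T S v. \<forall>u\<in>ext T S v. ip T (\<lambda>t. z t - w t) u = 0" using wE unfolding x_def by blast
qed

definition cs :: "nat \<Rightarrow> (nat \<Rightarrow> real) \<Rightarrow> (nat \<Rightarrow> real) \<Rightarrow> nat \<Rightarrow> (nat \<Rightarrow> real) set" where
  "cs T s n m = {(\<lambda>t. if t < T then (\<Sum>j<m. a j * delay s j t + b j * delay n j t) else 0) | a b. True}"

lemma csI: "(\<lambda>t. if t < T then (\<Sum>j<m. a j * delay s j t + b j * delay n j t) else 0) \<in> cs T s n m"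
  unfolding cs_def by blast

lemma cs_Suc: "cs T s n (Suc m) = ext T (ext T (cs T s n m) (delay s m)) (delay n m)"
proof (intro set_eqI iffI)
  fix u assume "u \<in> cs T s n (Suc m)"
  then obtain a b where u: "u = (\<lambda>t. if t < T then (\<Sum>j<Suc m. a j * delay s j t + b j * delay n j t) else 0)"
    unfolding cs_def by auto
  define w where "w = (\<lambda>t. if t < T then (\<Sum>j<m. a j * delay s j t + b j * delay n j t) else 0)"
  have "w \<in> cs T s n m" unfolding w_def cs_def by blast
  hence "(\<lambda>t. w t + a m * rT T (delay s m) t) \<in> ext T (cs T s n m) (delay s m)" by (rule extI)
  hence "(\<lambda>t. (\<lambda>t. w t + a m * rT T (delay s m) t) t + b m * rT T (delay n m) t) \<in> ext T (ext T (cs T s n m) (delay s m)) (delay n m)" by (rule extI)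
  moreover have "u = (\<lambda>t. (\<lambda>t. w t + a m * rT T (delay s m) t) t + b m * rT T (delay n m) t)"
    unfolding u w_def rT_def by (auto simp: algebra_simps)
  ultimately show "u \<in> ext T (ext T (cs T s n m) (delay s m)) (delay n m)" by simp
next
  fix u assume "u \<in> ext T (ext T (cs T s n m) (delay s m)) (delay n m)"
  then obtain w c1 c2 a b where h: "u = (\<lambda>t. w t + c2 * rT T (delay n m) t)"
    "w = (\<lambda>t. (\<lambda>t. if t < T then (\<Sum>j<m. a j * delay s j t + b j * delay n j t) else 0) t + c1 * rT T (delay s m) t)"
    unfolding ext_def cs_def by auto
  define a' where "a' = a(m := c1)"
  define b' where "b' = b(m := c2)"
  have "\<And>t. (\<Sum>j<m. a' j * delay s j t + b' j * delay n j t) = (\<Sum>j<m. a j * delay s j t + b j * delay n j t)"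
    by (rule sum.cong) (auto simp: a'_def b'_def)
  hence "u = (\<lambda>t. if t < T then (\<Sum>j<Suc m. a' j * delay s j t + b' j * delay n j t) else 0)"
    unfolding h rT_def by (auto simp: a'_def b'_def algebra_simps)
  thus "u \<in> cs T s n (Suc m)" unfolding cs_def by blast
qed

lemma cs_props: "CL (cs T s n m) \<and> HP T (cs T s n m)"
proof (induction m)
  case 0
  have e0: "\<And>a b. (\<lambda>t. if t < T then (\<Sum>j<(0::nat). a j * delay s j t + b j * delay n j t) else 0) = (\<lambda>t. 0::real)" by (rule ext) simp
  have e: "cs T s n 0 = {\<lambda>t. 0}" unfolding cs_def using e0 by auto
  show ?case unfolding e CL_def HP_def by (auto simp: ip_zero_right)
next
  case (Suc m)
  thus ?case unfolding cs_Suc by (meson CL_ext HP_ext)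
qed

lemma ip_cs: assumes "u \<in> cs T s n L"
  and "\<forall>j<L. ip T x (delay s j) = 0 \<and> ip T x (delay n j) = 0"
  shows "ip T x u = 0"
proof -
  obtain a b where u: "u = (\<lambda>t. if t < T then (\<Sum>j<L. a j * delay s j t + b j * delay n j t) else 0)"
    using assms(1) unfolding cs_def by auto
  have "ip T x u = (\<Sum>t<T. x t * (\<Sum>j<L. a j * delay s j t + b j * delay n j t))"
    unfolding ip_def u by simp
  also have "\<dots> = (\<Sum>j<L. a j * ip T x (delay s j) + b j * ip T x (delay n j))"
    unfolding ip_def by (simp add: sum_distrib_left sum_distrib_right sum.distrib algebra_simps sum.swap[of _ "{..<T}"])
  also have "\<dots> = 0" using assms(2) by simp
  finally show ?thesis .
qed

lemma delay_in_cs: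
  assumes "j < L" shows "rT T (delay s j) \<in> cs T s n L" "rT T (delay n j) \<in> cs T s n L"
proof -
  have "rT T (delay s j) = (\<lambda>t. if t < T then (\<Sum>i<L. (\<lambda>i. if i = j then 1 else 0) i * delay s i t + (\<lambda>i. 0) i * delay n i t) else 0)"
    using assms by (intro ext) (simp add: rT_def if_distrib[of "\<lambda>x. x * _"] sum.delta cong: if_cong)
  thus "rT T (delay s j) \<in> cs T s n L" using csI[where a="\<lambda>i. if i = j then 1 else 0" and b="\<lambda>i. 0" and m=L and s=s and n=n and T=T] by simp
  have "rT T (delay n j) = (\<lambda>t. if t < T then (\<Sum>i<L. (\<lambda>i. 0) i * delay s i t + (\<lambda>i. if i = j then 1 else 0) i * delay n i t) else 0)"
    using assms by (intro ext) (simp add: rT_def if_distrib[of "\<lambda>x. x * _"] sum.delta cong: if_cong)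
  thus "rT T (delay n j) \<in> cs T s n L" using csI[where a="\<lambda>i. 0" and b="\<lambda>i. if i = j then 1 else 0" and m=L and s=s and n=n and T=T] by simp
qed

lemma proj_char:
  assumes "w \<in> cs T s n L" "\<forall>u\<in>cs T s n L. ip T (\<lambda>t. z t - w t) u = 0"
  shows "proj T L s n z = w"
proof -
  have csc: "colspace T L s n = cs T s n L" unfolding colspace_def cs_def by simp
  have P1: "ip T (\<lambda>t. z t - w t) (delay s j) = 0 \<and> ip T (\<lambda>t. z t - w t) (delay n j) = 0" if "j < L" for j
  proof -
    have "ip T (\<lambda>t. z t - w t) (rT T (delay s j)) = 0" "ip T (\<lambda>t. z t - w t) (rT T (delay n j)) = 0"
      using assms(2) delay_in_cs[OF that] by blast+
    thus ?thesis by (simp add: ip_rT)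
  qed
  have P: "w \<in> colspace T L s n \<and> (\<forall>j<L. ip T (\<lambda>t. z t - w t) (delay s j) = 0 \<and> ip T (\<lambda>t. z t - w t) (delay n j) = 0)"
    using assms(1) csc P1 by simp
  show ?thesis unfolding proj_def
  proof (rule the_equality)
    show "w \<in> colspace T L s n \<and> (\<forall>j<L. ip T (\<lambda>t. z t - w t) (delay s j) = 0 \<and> ip T (\<lambda>t. z t - w t) (delay n j) = 0)" by (rule P)
  next
    fix w' assume h: "w' \<in> colspace T L s n \<and> (\<forall>j<L. ip T (\<lambda>t. z t - w' t) (delay s j) = 0 \<and> ip T (\<lambda>t. z t - w' t) (delay n j) = 0)"
    have w'cs: "w' \<in> cs T s n L" using h csc by simp
    have o1: "ip T (\<lambda>t. z t - w' t) u = 0" if "u \<in> cs T s n L" for u using ip_cs[OF that] h by blast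
    have o2: "ip T (\<lambda>t. z t - w t) u = 0" if "u \<in> cs T s n L" for u using assms(2) that by blast
    define d where "d = (\<lambda>t. w t - w' t)"
    have dd: "ip T d u = 0" if "u \<in> cs T s n L" for u
    proof -
      have "d = (\<lambda>t. (z t - w' t) - (z t - w t))" unfolding d_def by auto
      thus ?thesis using o1[OF that] o2[OF that] ip_diff_left[of T "\<lambda>t. z t - w' t" "\<lambda>t. z t - w t" u] by simp
    qed
    have i1: "ip T d d = ip T w d - ip T w' d" using ip_diff_left[of T w w' d] d_def by simp
    have "ip T w d = 0" "ip T w' d = 0" using dd[OF assms(1)] dd[OF w'cs] by (simp_all add: ip_sym)
    hence dz: "ip T d d = 0" using i1 by simp
    have lt: "w t = w' t" if "t < T" for t using sqnorm_zero[OF dz that] unfolding d_def by simp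
    have z1: "\<And>t. t \<ge> T \<Longrightarrow> w t = 0" using assms(1) unfolding cs_def by auto
    have z2: "\<And>t. t \<ge> T \<Longrightarrow> w' t = 0" using w'cs unfolding cs_def by auto
    show "w' = w"
    proof (rule ext)
      fix t show "w' t = w t" using lt z1 z2 by (cases "t < T") auto
    qed
  qed
qed

lemma proj_props: "proj T L s n z \<in> cs T s n L \<and> (\<forall>u\<in>cs T s n L. ip T (\<lambda>t. z t - proj T L s n z t) u = 0)"
proof -
  obtain w where "w \<in> cs T s n L" "\<forall>u\<in>cs T s n L. ip T (\<lambda>t. z t - w t) u = 0"
    using cs_props[of T s n L] unfolding HP_def by blast
  thus ?thesis using proj_char by metis
qed

theorem proposition1:
  fixes T L :: nat and s n shat :: "nat \<Rightarrow> real" and w_obs :: real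
  assumes "L \<ge> 1"
    and "full_col_rank T L s n"
    and "w_obs > 0"
    and "nonzero_vec T (proj T L s n shat)"
    and "nonzero_vec T (e_artif T L s n shat)"
    and "ip T shat (\<lambda>t. s t + n t) > 0"
  shows "SAR T L s n (\<lambda>t. shat t + w_obs * (s t + n t)) > SAR T L s n shat"
proof -
  define p where "p = proj T L s n shat"
  define y where "y = (\<lambda>t. s t + n t)"
  define y' where "y' = rT T y"
  define z2 where "z2 = (\<lambda>t. shat t + w_obs * (s t + n t))"
  have pp: "p \<in> cs T s n L" "\<And>u. u \<in> cs T s n L \<Longrightarrow> ip T (\<lambda>t. shat t - p t) u = 0"
    using proj_props[of T L s n shat] unfolding p_def by auto
  have y'cs: "y' \<in> cs T s n L"
  proof -
    have "y' = (\<lambda>t. if t < T then (\<Sum>j<L. (\<lambda>j. if j = 0 then 1 else 0) j * delay s j t + (\<lambda>j. if j = 0 then 1 else 0) j * delay n j t) else 0)"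
      using assms(1) by (intro ext) (simp add: y'_def y_def rT_def if_distrib[of "\<lambda>x. x * _"] sum.delta sum.delta' sum.distrib distrib_right delay_def cong: if_cong)
    thus ?thesis using csI[where a="\<lambda>j. if j = 0 then 1 else 0" and b="\<lambda>j. if j = 0 then 1 else 0" and m=L and s=s and n=n and T=T] by simp
  qed
  define q where "q = (\<lambda>t. p t - (- w_obs) * y' t)"
  have qcs: "q \<in> cs T s n L" using cs_props[of T s n L] pp(1) y'cs unfolding CL_def q_def by blast
  have qp: "proj T L s n z2 = q"
  proof (rule proj_char[OF qcs], intro ballI)
    fix u assume u: "u \<in> cs T s n L"
    have "ip T (\<lambda>t. z2 t - q t) u = ip T (\<lambda>t. shat t - p t) u"
      by (rule ip_cong) (auto simp: z2_def q_def y'_def rT_def y_def algebra_simps)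
    thus "ip T (\<lambda>t. z2 t - q t) u = 0" using pp(2)[OF u] by simp
  qed
  have ee: "sqnorm T (e_artif T L s n z2) = sqnorm T (e_artif T L s n shat)"
    unfolding sqnorm_def e_artif_def qp p_def[symmetric]
    by (rule ip_cong) (auto simp: z2_def q_def y'_def rT_def y_def algebra_simps)
  have ipy: "ip T p y' = ip T shat y"
  proof -
    have "ip T shat y' - ip T p y' = 0" using pp(2)[OF y'cs] ip_diff_left[of T shat p y'] by simp
    moreover have "ip T shat y' = ip T shat y" unfolding y'_def by (rule ip_rT)
    ultimately show ?thesis by simp
  qed
  have yy: "ip T y' y' \<ge> 0" unfolding ip_def by (auto intro: sum_nonneg)
  have "sqnorm T q = ip T p p + 2 * w_obs * ip T p y' + w_obs^2 * ip T y' y'"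
    unfolding sqnorm_def q_def
    by (simp add: ip_def sum.distrib sum_distrib_left algebra_simps power2_eq_square)
  moreover have "ip T shat y > 0" using assms(6) unfolding y_def .
  ultimately have gt: "sqnorm T q > sqnorm T p"
    using ipy yy assms(3) unfolding sqnorm_def
    by (smt (verit) mult_nonneg_nonneg mult_pos_pos zero_le_power2)
  have pos1: "sqnorm T p > 0" using sqnorm_pos assms(4) unfolding p_def by blast
  have pos2: "sqnorm T (e_artif T L s n shat) > 0" using sqnorm_pos assms(5) by blast
  have "sqnorm T p / sqnorm T (e_artif T L s n shat) < sqnorm T q / sqnorm T (e_artif T L s n shat)"
    using gt pos2 by (simp add: divide_strict_right_mono)
  moreover have "sqnorm T p / sqnorm T (e_artif T L s n shat) > 0" using pos1 pos2 by simp
  ultimately have "log 10 (sqnorm T p / sqnorm T (e_artif T L s n shat)) < log 10 (sqnorm T q / sqnorm T (e_artif T L s n shat))"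
    by simp
  thus ?thesis unfolding SAR_def z2_def[symmetric] qp ee p_def[symmetric] by simp
qed

end
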